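(* Fix a prime $p$ and $n\in\mathbb{N}$, and let $\mathbb{L}_{p,n}$ denote the restriction of $\mathbb{L}_p(r)=|r|+\|r\|_p$ to the subgroup $\frac{1}{p^n}\mathbb{Z}$ of $\mathbb{Z}[\tfrac1p]$. Then $\frac1{p^n}\mathbb{Z}$ has the property of bounded $p$-dilation with respect to $\mathbb{L}_{p,n}$. In particular, $\mathbb{L}_{p,n}$ is of bounded doubling with constant $C_{\mathbb{L}_{p,n}}=4p^8$.
   Context: $\mathbb{Z}[\tfrac1p]=\{a/p^k:a\in\mathbb{Z},k\in\mathbb{N}\}$; $\|\cdot\|_p$ is the $p$-adic norm ($\|0\|_p=0$, $\|r\|_p=p^{-n}$ if $r=ap^n/b$ with $a,b$ coprime to $p$ and to each other). For a length function $\mathbb{L}$ on a discrete group $\Gamma$ (i.e. $\mathbb{L}(\gamma)=0\iff\gamma=e$, symmetric, subadditive), $B_{\mathbb{L}}(R)=\{\gamma:\mathbb{L}(\gamma)\le R\}$; $\mathbb{L}$ is proper if all $B_{\mathbb{L}}(R)$ are finite; $\Gamma$ has bounded $\mathbf t$-dilation w.r.t. $\mathbb{L}$ ($\mathbf t>1$) if $\mathbb{L}$ is proper and $|B_{\mathbb{L}}(\mathbf tR)|\le K|B_{\mathbb{L}}(R)|$ for some $K<\infty$ and all $R\ge1$; $\mathbb{L}$ is of bounded doubling with constant $C$ if it is proper and $|B_{\mathbb{L}}(2R)|\le C|B_{\mathbb{L}}(R)|$ for all $R\ge1$. *)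

theory Defs
  imports "HOL-Analysis.Analysis" "HOL-Computational_Algebra.Primes"
begin

definition padic_val :: "nat \<Rightarrow> rat \<Rightarrow> int" where
  "padic_val p r = (case quotient_of r of (a, b) \<Rightarrow>
      int (multiplicity (int p) a) - int (multiplicity (int p) b))"

definition padic_norm :: "nat \<Rightarrow> rat \<Rightarrow> real" where
  "padic_norm p r = (if r = 0 then 0 else real p powi (- padic_val p r))"

definition Lp :: "nat \<Rightarrow> rat \<Rightarrow> real" where
  "Lp p r = real_of_rat \<bar>r\<bar> + padic_norm p r"

definition Gpn :: "nat \<Rightarrow> nat \<Rightarrow> rat set" where
  "Gpn p n = {r. \<exists>a::int. r = of_int a / of_nat p ^ n}"

definition length_function :: "rat set \<Rightarrow> (rat \<Rightarrow> real) \<Rightarrow> bool" where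
  "length_function G L \<longleftrightarrow>
     (\<forall>g\<in>G. L g = 0 \<longleftrightarrow> g = 0) \<and>
     (\<forall>g\<in>G. L (- g) = L g) \<and>
     (\<forall>g\<in>G. \<forall>h\<in>G. L (g + h) \<le> L g + L h)"

definition ball_L :: "rat set \<Rightarrow> (rat \<Rightarrow> real) \<Rightarrow> real \<Rightarrow> rat set" where
  "ball_L G L R = {g \<in> G. L g \<le> R}"

definition proper_L :: "rat set \<Rightarrow> (rat \<Rightarrow> real) \<Rightarrow> bool" where
  "proper_L G L \<longleftrightarrow> (\<forall>R. finite (ball_L G L R))"

definition bounded_dilation :: "rat set \<Rightarrow> (rat \<Rightarrow> real) \<Rightarrow> real \<Rightarrow> bool" where
  "bounded_dilation G L t \<longleftrightarrow> t > 1 \<and> proper_L G L \<and>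
     (\<exists>K::real. \<forall>R\<ge>1. real (card (ball_L G L (t * R))) \<le> K * real (card (ball_L G L R)))"

definition bounded_doubling :: "rat set \<Rightarrow> (rat \<Rightarrow> real) \<Rightarrow> real \<Rightarrow> bool" where
  "bounded_doubling G L C \<longleftrightarrow> proper_L G L \<and>
     (\<forall>R\<ge>1. real (card (ball_L G L (2 * R))) \<le> C * real (card (ball_L G L R)))"

end

theory Submission
  imports Defs
begin

lemma pe_int: "prime (p::nat) \<Longrightarrow> prime_elem (int p)"
  by (simp add: prime_imp_prime_elem)

lemma val_frac:
  assumes "prime p" "x \<noteq> 0" "y \<noteq> 0"
  shows "padic_val p (of_int x / of_int y) = int (multiplicity (int p) x) - int (multiplicity (int p) y)"
proof -
  obtain a b where q: "quotient_of (of_int x / of_int y) = (a,b)"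
    by (cases "quotient_of (of_int x / of_int y)") auto
  have b: "b > 0" using quotient_of_denom_pos[OF q] .
  have e: "of_int x / of_int y = (of_int a / of_int b :: rat)" using quotient_of_div[OF q] .
  have a: "a \<noteq> 0" using e assms by auto
  have "(of_int x * of_int b :: rat) = of_int a * of_int y"
    using e assms b by (simp add: field_simps)
  then have xy: "x * b = a * y" by (metis of_int_eq_iff of_int_mult)
  have pe: "prime_elem (int p)" using pe_int assms(1) .
  have "multiplicity (int p) (x*b) = multiplicity (int p) (a*y)" using xy by simp
  then have "multiplicity (int p) x + multiplicity (int p) b = multiplicity (int p) a + multiplicity (int p) y"
    using prime_elem_multiplicity_mult_distrib[OF pe] assms b a by simp
  then show ?thesis by (simp add: padic_val_def q)
qed

lemma mult_neg: "multiplicity (int p) (- a) = multiplicity (int p) a"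
  by (rule multiplicity_cong) simp

lemma norm_G:
  assumes "prime p" "a \<noteq> 0"
  shows "padic_norm p (of_int a / of_nat p ^ n) = real p ^ n / real p ^ multiplicity (int p) a"
proof -
  have p0: "p \<noteq> 0" using assms(1) by auto
  have eq: "(of_nat p ^ n :: rat) = of_int (int p ^ n)" by simp
  have "padic_val p (of_int a / of_nat p ^ n) = int (multiplicity (int p) a) - int n"
    unfolding eq using val_frac[OF assms(1) assms(2), of "int p ^ n"] p0
      multiplicity_prime_power[OF pe_int[OF assms(1)]] by simp
  moreover have "(of_int a / of_nat p ^ n :: rat) \<noteq> 0" using assms p0 by simp
  ultimately have "padic_norm p (of_int a / of_nat p ^ n) = real p powi (int n - int (multiplicity (int p) a))"
    by (simp add: padic_norm_def)
  also have "\<dots> = real p ^ n / real p ^ multiplicity (int p) a"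
    using p0 by (simp add: power_int_diff)
  finally show ?thesis .
qed

lemma norm_nonneg: "padic_norm p r \<ge> 0"
  by (simp add: padic_norm_def)

lemma norm_pos: "prime p \<Longrightarrow> r \<noteq> 0 \<Longrightarrow> padic_norm p r > 0"
  by (simp add: padic_norm_def prime_gt_0_nat)

lemma Lp_f:
  assumes "prime p"
  shows "Lp p (of_int a / of_nat p ^ n) = \<bar>real_of_int a\<bar> / real p ^ n +
     (if a = 0 then 0 else real p ^ n / real p ^ multiplicity (int p) a)"
proof -
  have "real_of_rat \<bar>of_int a / of_nat p ^ n\<bar> = \<bar>real_of_int a\<bar> / real p ^ n"
    by (simp add: of_rat_divide of_rat_power abs_divide flip: of_int_abs)
  then show ?thesis using norm_G[OF assms] by (simp add: Lp_def padic_norm_def)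
qed

lemma ultra:
  assumes "prime p" "a \<noteq> 0" "b \<noteq> 0" "a + b \<noteq> 0"
  shows "min (multiplicity (int p) a) (multiplicity (int p) b) \<le> multiplicity (int p) (a + b)"
proof -
  let ?k = "min (multiplicity (int p) a) (multiplicity (int p) b)"
  have "int p ^ ?k dvd a" by (rule multiplicity_dvd') simp
  moreover have "int p ^ ?k dvd b" by (rule multiplicity_dvd') simp
  ultimately have "int p ^ ?k dvd a + b" by simp
  moreover have "\<not> is_unit (int p)" using assms(1) by (simp add: prime_nat_iff)
  ultimately show ?thesis using multiplicity_geI assms(4) by blast
qed

lemma frac_norm_le:
  assumes "prime p" "k \<le> j"
  shows "real p ^ n / real p ^ j \<le> real p ^ n / real p ^ k"
proof -
  have "real p \<ge> 1" using assms(1) prime_gt_0_nat by (simp add: Suc_le_eq)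
  then have "real p ^ k \<le> real p ^ j" using assms(2) by (simp add: power_increasing)
  moreover have "real p ^ k > 0" using assms(1) prime_gt_0_nat by simp
  ultimately show ?thesis by (simp add: frac_le)
qed

lemma Lp_len:
  assumes "prime p"
  shows "length_function (Gpn p n) (Lp p)"
proof -
  have p0: "p \<noteq> 0" using assms by auto
  have A: "Lp p g = 0 \<longleftrightarrow> g = 0" for g
  proof
    assume z: "Lp p g = 0"
    have ge: "real_of_rat \<bar>g\<bar> \<ge> 0" by simp
    show "g = 0"
    proof (rule ccontr)
      assume "g \<noteq> 0"
      then have "padic_norm p g > 0" using norm_pos[OF assms] by blast
      then show False using z ge unfolding Lp_def by linarith
    qed
  qed (simp add: Lp_def padic_norm_def)
  have B: "Lp p (- g) = Lp p g" if gG: "g \<in> Gpn p n" for g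
  proof -
    obtain a where g: "g = of_int a / of_nat p ^ n" using gG by (auto simp: Gpn_def)
    have ng: "- g = of_int (-a) / of_nat p ^ n" using g by simp
    show ?thesis unfolding ng unfolding g Lp_f[OF assms] mult_neg by simp
  qed
  have C: "Lp p (g + h) \<le> Lp p g + Lp p h" if gG: "g \<in> Gpn p n" and hG: "h \<in> Gpn p n" for g h
  proof -
    obtain a where g: "g = of_int a / of_nat p ^ n" using gG by (auto simp: Gpn_def)
    obtain b where h: "h = of_int b / of_nat p ^ n" using hG by (auto simp: Gpn_def)
    have gh: "g + h = of_int (a + b) / of_nat p ^ n" using g h by (simp add: add_divide_distrib)
    define P where "P = real p"
    define Na where "Na = multiplicity (int p) a"
    define Nb where "Nb = multiplicity (int p) b"
    define Nab where "Nab = multiplicity (int p) (a+b)"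
    have Pn: "P ^ n > 0" using p0 by (simp add: P_def)
    have abs: "\<bar>real_of_int (a+b)\<bar> / P ^ n \<le> \<bar>real_of_int a\<bar> / P ^ n + \<bar>real_of_int b\<bar> / P ^ n"
      using Pn by (simp add: add_divide_distrib[symmetric] divide_right_mono abs_triangle_ineq)
    have nn: "P ^ n / P ^ k \<ge> 0" for k using Pn by (simp add: P_def)
    have nrm: "(if a + b = 0 then 0 else P ^ n / P ^ Nab) \<le>
       (if a = 0 then 0 else P ^ n / P ^ Na) + (if b = 0 then 0 else P ^ n / P ^ Nb)"
    proof (cases "a = 0 \<or> b = 0 \<or> a + b = 0")
      case True
      then show ?thesis using nn by (auto simp: Na_def Nb_def Nab_def)
    next
      case False
      then have "min Na Nb \<le> Nab" using ultra[OF assms] by (auto simp: Na_def Nb_def Nab_def)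
      then have "P ^ n / P ^ Nab \<le> P ^ n / P ^ min Na Nb"
        using frac_norm_le[OF assms] by (simp add: P_def)
      also have "\<dots> \<le> P ^ n / P ^ Na + P ^ n / P ^ Nb"
        using nn[of Na] nn[of Nb] by (cases "Na \<le> Nb") (auto simp: min_def)
      finally show ?thesis using False by simp
    qed
    have e1: "Lp p (g + h) = \<bar>real_of_int (a+b)\<bar> / P ^ n + (if a + b = 0 then 0 else P ^ n / P ^ Nab)"
      unfolding gh Lp_f[OF assms] P_def Nab_def ..
    have e2: "Lp p g = \<bar>real_of_int a\<bar> / P ^ n + (if a = 0 then 0 else P ^ n / P ^ Na)"
      unfolding g Lp_f[OF assms] P_def Na_def ..
    have e3: "Lp p h = \<bar>real_of_int b\<bar> / P ^ n + (if b = 0 then 0 else P ^ n / P ^ Nb)"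
      unfolding h Lp_f[OF assms] P_def Nb_def ..
    have k: "\<And>x y u v w z::real. x \<le> u + v \<Longrightarrow> y \<le> w + z \<Longrightarrow> x + y \<le> (u + w) + (v + z)"
      by linarith
    show ?thesis unfolding e1 e2 e3 by (rule k[OF abs nrm])
  qed
  show ?thesis unfolding length_function_def
    by (intro conjI ballI A B C)
qed

lemma box_eq: "{c::int. \<bar>real_of_int c\<bar> \<le> Y} = {- \<lfloor>Y\<rfloor>..\<lfloor>Y\<rfloor>}"
proof -
  have l1: "\<bar>real_of_int c\<bar> \<le> Y \<longleftrightarrow> \<bar>c\<bar> \<le> \<lfloor>Y\<rfloor>" for c
    by (metis le_floor_iff of_int_abs)
  show ?thesis unfolding l1 by (auto simp: abs_le_iff)
qed

lemma box_fin: "finite {c::int. \<bar>real_of_int c\<bar> \<le> Y}"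
  unfolding box_eq by simp

lemma box_upper: "Y \<ge> 0 \<Longrightarrow> real (card {c::int. \<bar>real_of_int c\<bar> \<le> Y}) \<le> 2 * Y + 1"
  unfolding box_eq by simp

lemma box_lower: "Y \<ge> 0 \<Longrightarrow> Y \<le> real (card {c::int. \<bar>real_of_int c\<bar> \<le> Y})"
proof -
  assume Y: "Y \<ge> 0"
  have f1: "real_of_int \<lfloor>Y\<rfloor> \<le> Y" "Y < real_of_int \<lfloor>Y\<rfloor> + 1" by linarith+
  have f2: "\<lfloor>Y\<rfloor> \<ge> 0" using Y by simp
  have "Y \<le> 2 * real_of_int \<lfloor>Y\<rfloor> + 1" using f1 f2 by linarith
  then show ?thesis unfolding box_eq by simp
qed

lemma ball_eq: "ball_L (Gpn p n) (Lp p) S =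
   (\<lambda>a. of_int a / of_nat p ^ n) ` {a. Lp p (of_int a / of_nat p ^ n) \<le> S}"
  by (auto simp: ball_L_def Gpn_def)

lemma f_inj: "prime p \<Longrightarrow> inj (\<lambda>a::int. (of_int a / of_nat p ^ n :: rat))"
  by (auto simp: inj_def prime_gt_0_nat)

lemma card_ball: "prime p \<Longrightarrow> card (ball_L (Gpn p n) (Lp p) S) =
   card {a. Lp p (of_int a / of_nat p ^ n) \<le> S}"
  unfolding ball_eq by (rule card_image) (metis f_inj inj_on_subset subset_UNIV)

lemma Lp_abs_le:
  assumes "prime p"
  shows "\<bar>real_of_int a\<bar> / real p ^ n \<le> Lp p (of_int a / of_nat p ^ n)"
proof -
  have "real p ^ n / real p ^ multiplicity (int p) a \<ge> 0" by simp
  then show ?thesis unfolding Lp_f[OF assms] by simp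
qed

lemma A_fin:
  assumes "prime p"
  shows "finite {a. Lp p (of_int a / of_nat p ^ n) \<le> S}"
proof -
  have Pn: "real p ^ n > 0" using assms prime_gt_0_nat by simp
  have "{a. Lp p (of_int a / of_nat p ^ n) \<le> S} \<subseteq> {c::int. \<bar>real_of_int c\<bar> \<le> S * real p ^ n}"
  proof safe
    fix a assume "Lp p (of_int a / of_nat p ^ n) \<le> S"
    then have "\<bar>real_of_int a\<bar> / real p ^ n \<le> S" using Lp_abs_le[OF assms, of a n] by linarith
    then show "\<bar>real_of_int a\<bar> \<le> S * real p ^ n" using Pn by (simp add: divide_le_eq)
  qed
  then show ?thesis using box_fin finite_subset by blast
qed

lemma A_upper:
  assumes "prime p" "m \<le> n" "m = n \<or> S < real p ^ (m+1)" "S \<ge> 0"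
  shows "real (card {a. Lp p (of_int a / of_nat p ^ n) \<le> S}) \<le> 2 * (S * real p ^ m) + 1"
proof -
  define d where "d = n - m"
  have nd: "n = d + m" using assms(2) d_def by simp
  have p1: "real p > 1" using assms(1) prime_gt_1_nat by simp
  have Pm: "real p ^ m > 0" "real p ^ d > 0" using p1 by simp_all
  have sub: "{a. Lp p (of_int a / of_nat p ^ n) \<le> S} \<subseteq>
      (\<lambda>c. c * int p ^ d) ` {c. \<bar>real_of_int c\<bar> \<le> S * real p ^ m}"
  proof
    fix a assume "a \<in> {a. Lp p (of_int a / of_nat p ^ n) \<le> S}"
    then have L: "Lp p (of_int a / of_nat p ^ n) \<le> S" by simp
    have dv: "int p ^ d dvd a"
    proof (cases "a = 0 \<or> m = n")
      case True
      then show ?thesis using d_def by auto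
    next
      case False
      then have Sl: "S < real p ^ (m+1)" using assms(3) by simp
      have "real p ^ n / real p ^ multiplicity (int p) a \<le> Lp p (of_int a / of_nat p ^ n)"
        unfolding Lp_f[OF assms(1)] using False by simp
      then have "real p ^ n / real p ^ multiplicity (int p) a < real p ^ (m+1)" using L Sl by linarith
      then have "real p ^ n < real p ^ (m+1) * real p ^ multiplicity (int p) a"
        using p1 by (simp add: divide_less_eq)
      then have "real p ^ n < real p ^ (m + 1 + multiplicity (int p) a)" by (simp add: power_add)
      then have "n < m + 1 + multiplicity (int p) a" using p1 power_strict_increasing_iff by blast
      then have "d \<le> multiplicity (int p) a" using d_def by simp
      then show ?thesis by (rule multiplicity_dvd')
    qed
    then obtain c where c: "a = c * int p ^ d" by (metis dvd_def mult.commute)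
    have "\<bar>real_of_int a\<bar> / real p ^ n \<le> S" using Lp_abs_le[OF assms(1), of a n] L by linarith
    then have "\<bar>real_of_int c\<bar> * real p ^ d / (real p ^ d * real p ^ m) \<le> S"
      unfolding c nd power_add by (simp add: abs_mult)
    then have "\<bar>real_of_int c\<bar> / real p ^ m \<le> S" using Pm by (simp add: prime_gt_0_nat[OF assms(1)])
    then have "\<bar>real_of_int c\<bar> \<le> S * real p ^ m" using Pm by (simp add: divide_le_eq)
    then show "a \<in> (\<lambda>c. c * int p ^ d) ` {c. \<bar>real_of_int c\<bar> \<le> S * real p ^ m}" using c by blast
  qed
  have "card {a. Lp p (of_int a / of_nat p ^ n) \<le> S} \<le>
      card ((\<lambda>c. c * int p ^ d) ` {c. \<bar>real_of_int c\<bar> \<le> S * real p ^ m})"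
    by (rule card_mono[OF _ sub]) (simp add: box_fin)
  also have "\<dots> \<le> card {c. \<bar>real_of_int c\<bar> \<le> S * real p ^ m}" by (rule card_image_le) (simp add: box_fin)
  finally have "real (card {a. Lp p (of_int a / of_nat p ^ n) \<le> S}) \<le> real (card {c. \<bar>real_of_int c\<bar> \<le> S * real p ^ m})"
    by simp
  also have "\<dots> \<le> 2 * (S * real p ^ m) + 1" using box_upper Pm assms(4) by simp
  finally show ?thesis .
qed

lemma A_lower:
  assumes "prime p" "m \<le> n" "real p ^ m \<le> R / 2"
  shows "R / 2 * real p ^ m \<le> real (card {a. Lp p (of_int a / of_nat p ^ n) \<le> R})"
proof -
  define d where "d = n - m"
  have nd: "n = d + m" using assms(2) d_def by simp
  have p1: "real p > 1" using assms(1) prime_gt_1_nat by simp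
  have Pm: "real p ^ m > 0" "real p ^ d > 0" using p1 by simp_all
  have pd0: "int p ^ d \<noteq> 0" using assms(1) prime_gt_0_nat by simp
  have sub: "(\<lambda>c. c * int p ^ d) ` {c. \<bar>real_of_int c\<bar> \<le> R / 2 * real p ^ m} \<subseteq>
      {a. Lp p (of_int a / of_nat p ^ n) \<le> R}"
  proof safe
    fix c assume c: "\<bar>real_of_int c\<bar> \<le> R / 2 * real p ^ m"
    define a where "a = c * int p ^ d"
    have ab: "\<bar>real_of_int a\<bar> / real p ^ n = \<bar>real_of_int c\<bar> / real p ^ m"
      unfolding a_def nd power_add using Pm by (simp add: abs_mult)
    also have "\<dots> \<le> R / 2" using c Pm by (simp add: divide_le_eq)
    finally have ab2: "\<bar>real_of_int a\<bar> / real p ^ n \<le> R / 2" .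
    have nr: "(if a = 0 then 0 else real p ^ n / real p ^ multiplicity (int p) a) \<le> R / 2"
    proof (cases "a = 0")
      case True
      have "R \<ge> 0" using assms(3) Pm(1) by linarith
      with True show ?thesis by simp
    next
      case False
      have "\<not> is_unit (int p)" using assms(1) by (simp add: prime_nat_iff)
      moreover have "int p ^ d dvd a" unfolding a_def by simp
      ultimately have "d \<le> multiplicity (int p) a" using multiplicity_geI False by blast
      then have "real p ^ n / real p ^ multiplicity (int p) a \<le> real p ^ n / real p ^ d"
        by (rule frac_norm_le[OF assms(1)])
      also have "\<dots> = real p ^ m" unfolding nd power_add using Pm by simp
      finally have "real p ^ n / real p ^ multiplicity (int p) a \<le> R / 2" using assms(3) by linarith
      then show ?thesis using False by simp
    qed
    show "Lp p (of_int (c * int p ^ d) / of_nat p ^ n) \<le> R"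
      using ab2 nr unfolding Lp_f[OF assms(1)] a_def by linarith
  qed
  have inj: "inj_on (\<lambda>c. c * int p ^ d) {c. \<bar>real_of_int c\<bar> \<le> R / 2 * real p ^ m}"
    using pd0 by (auto simp: inj_on_def)
  have "card {c. \<bar>real_of_int c\<bar> \<le> R / 2 * real p ^ m} \<le> card {a. Lp p (of_int a / of_nat p ^ n) \<le> R}"
    by (rule card_inj_on_le[OF inj sub A_fin[OF assms(1)]])
  moreover have "R / 2 * real p ^ m \<le> real (card {c. \<bar>real_of_int c\<bar> \<le> R / 2 * real p ^ m})"
  proof (rule box_lower)
    have "R / 2 \<ge> 0" using Pm(1) assms(3) by linarith
    then show "0 \<le> R / 2 * real p ^ m" using Pm(1) by simp
  qed
  ultimately show ?thesis by linarith
qed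

lemma ex_m:
  assumes "prime p" "S \<ge> 1"
  shows "\<exists>m \<le> n. real p ^ m \<le> S \<and> (m = n \<or> S < real p ^ (m+1))"
proof -
  have f1: "\<lfloor>S\<rfloor> \<ge> 1" using assms(2) by (simp add: le_floor_iff)
  then have k1: "nat \<lfloor>S\<rfloor> \<ge> 1" by linarith
  have p2: "p \<ge> 2" using assms(1) prime_ge_2_nat by blast
  obtain j where j: "p ^ j \<le> nat \<lfloor>S\<rfloor>" "nat \<lfloor>S\<rfloor> < p ^ (j+1)"
    using ex_power_ivl1[OF p2 k1] by blast
  have rS: "real (nat \<lfloor>S\<rfloor>) = real_of_int \<lfloor>S\<rfloor>" using f1 by simp
  have "real (p ^ j) \<le> real (nat \<lfloor>S\<rfloor>)" using j(1) by (simp only: of_nat_le_iff)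
  then have j1: "real p ^ j \<le> S" using rS by simp linarith
  have "nat \<lfloor>S\<rfloor> + 1 \<le> p ^ (j+1)" using j(2) by simp
  then have "real (nat \<lfloor>S\<rfloor> + 1) \<le> real (p ^ (j+1))" by (simp only: of_nat_le_iff)
  then have "real (nat \<lfloor>S\<rfloor>) + 1 \<le> real (p ^ (j+1))" by simp
  then have j2: "S < real p ^ (j+1)" using rS by simp linarith
  show ?thesis
  proof (cases "j \<le> n")
    case True
    then show ?thesis using j1 j2 by blast
  next
    case False
    have "real p ^ n \<le> real p ^ j" using False p2 by (intro power_increasing) auto
    then show ?thesis using j1 by auto
  qed
qed

lemma dil:
  assumes "prime p" "t \<ge> 1" "R \<ge> 1"
  shows "real (card (ball_L (Gpn p n) (Lp p) (t * R))) \<le>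
    (8 * t ^ 2 * real p + 1) * real (card (ball_L (Gpn p n) (Lp p) R))"
proof -
  define cA where "cA S = real (card {a. Lp p (of_int a / of_nat p ^ n) \<le> S})" for S
  have eqs: "real (card (ball_L (Gpn p n) (Lp p) S)) = cA S" for S
    by (simp add: cA_def card_ball[OF assms(1)])
  have P2: "real p \<ge> 2" using assms(1) prime_ge_2_nat by (metis of_nat_le_iff of_nat_numeral)
  have "1 * 1 \<le> t * R" using assms(2,3) by (intro mult_mono) auto
  then have tR: "t * R \<ge> 1" by simp
  obtain m where m: "m \<le> n" "real p ^ m \<le> t * R" "m = n \<or> t * R < real p ^ (m+1)"
    using ex_m[OF assms(1) tR] by blast
  have up: "cA (t * R) \<le> 2 * (t * R * real p ^ m) + 1"
    unfolding cA_def using A_upper[OF assms(1) m(1) m(3)] tR by simp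
  have c1: "cA R \<ge> 1"
  proof -
    have "0 \<in> {a. Lp p (of_int a / of_nat p ^ n) \<le> R}" using assms(3) by (simp add: Lp_def padic_norm_def)
    then have "card {a. Lp p (of_int a / of_nat p ^ n) \<le> R} > 0"
      using A_fin[OF assms(1)] card_gt_0_iff by blast
    then show ?thesis unfolding cA_def by simp
  qed
  define K where "K = 8 * t ^ 2 * real p + 1"
  have K0: "K \<ge> 0" unfolding K_def using P2 by simp
  have "cA (t * R) \<le> K * cA R"
  proof (cases "R < 2")
    case True
    have "t * R * real p ^ m \<le> (t * R) * (t * R)" using m(2) tR by (intro mult_left_mono) auto
    also have "\<dots> \<le> (2 * t) * (2 * t)"
    proof -
      have "t * R \<le> t * 2" using True assms by (intro mult_left_mono) auto
      then have h: "t * R \<le> 2 * t" by simp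
      show ?thesis using mult_mono[OF h h] tR assms(2) by simp
    qed
    finally have a1: "cA (t * R) \<le> 8 * t ^ 2 + 1" using up by (simp add: power2_eq_square)
    have "8 * t ^ 2 * 1 \<le> 8 * t ^ 2 * real p" using P2 by (intro mult_left_mono) auto
    then have "cA (t * R) \<le> K * 1" using a1 unfolding K_def mult_1_right by linarith
    also have "\<dots> \<le> K * cA R" using c1 K0 by (intro mult_left_mono) auto
    finally show "cA (t * R) \<le> K * cA R" .
  next
    case False
    then have R2: "R / 2 \<ge> 1" by simp
    obtain m' where m': "m' \<le> n" "real p ^ m' \<le> R / 2" "m' = n \<or> R / 2 < real p ^ (m'+1)"
      using ex_m[OF assms(1) R2] by blast
    define X where "X = R / 2 * real p ^ m'"
    have lo: "X \<le> cA R" unfolding X_def cA_def using A_lower[OF assms(1) m'(1)] m'(2) by simp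
    have pm1: "real p ^ m' \<ge> 1" using P2 by simp
    have "1 * 1 \<le> R / 2 * real p ^ m'" using R2 pm1 by (intro mult_mono) auto
    then have X1: "X \<ge> 1" unfolding X_def by simp
    have "1 * 1 \<le> t * real p" using assms(2) P2 by (intro mult_mono) auto
    then have tp: "2 * t * real p \<ge> 1" by (simp add: mult.assoc)
    have pm: "real p ^ m \<le> 2 * t * real p * real p ^ m'"
    proof (cases "m' = n")
      case True
      have "real p ^ m \<le> real p ^ m'" using m(1) True P2 by (intro power_increasing) auto
      also have "\<dots> = 1 * real p ^ m'" by simp
      also have "\<dots> \<le> 2 * t * real p * real p ^ m'" using tp pm1 by (intro mult_right_mono) auto
      finally show ?thesis .
    next
      case False
      then have "R / 2 < real p ^ (m'+1)" using m'(3) by simp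
      then have "t * R < 2 * t * real p ^ (m'+1)" using assms(2) by simp
      then show ?thesis using m(2) by simp
    qed
    have "cA (t * R) \<le> 2 * (t * R * (2 * t * real p * real p ^ m')) + 1"
    proof -
      have "t * R * real p ^ m \<le> t * R * (2 * t * real p * real p ^ m')"
        using pm tR by (intro mult_left_mono) auto
      then show ?thesis using up by linarith
    qed
    also have "\<dots> = 8 * t ^ 2 * real p * X + 1" by (simp add: X_def power2_eq_square algebra_simps)
    also have "\<dots> \<le> K * X" unfolding K_def using X1 by (simp add: algebra_simps)
    also have "\<dots> \<le> K * cA R" using lo K0 by (intro mult_left_mono) auto
    finally show "cA (t * R) \<le> K * cA R" .
  qed
  then show ?thesis unfolding eqs K_def .
qed

lemma proper:
  assumes "prime p"
  shows "proper_L (Gpn p n) (Lp p)"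
  unfolding proper_L_def ball_eq using A_fin[OF assms] by blast

theorem lemma3p16:
  fixes p n :: nat
  assumes "prime p"
  shows "length_function (Gpn p n) (Lp p)
       \<and> bounded_dilation (Gpn p n) (Lp p) (real p)
       \<and> bounded_doubling (Gpn p n) (Lp p) (4 * real p ^ 8)"
proof (intro conjI)
  show "length_function (Gpn p n) (Lp p)" by (rule Lp_len[OF assms])
  have P2: "real p \<ge> 2" using assms prime_ge_2_nat by (metis of_nat_le_iff of_nat_numeral)
  show "bounded_dilation (Gpn p n) (Lp p) (real p)"
    unfolding bounded_dilation_def
  proof (intro conjI exI allI impI)
    show "real p > 1" using P2 by simp
    show "proper_L (Gpn p n) (Lp p)" by (rule proper[OF assms])
    fix R :: real assume "R \<ge> 1"
    then show "real (card (ball_L (Gpn p n) (Lp p) (real p * R))) \<le>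
      (8 * real p ^ 2 * real p + 1) * real (card (ball_L (Gpn p n) (Lp p) R))"
      using dil[OF assms, of "real p" R] P2 by simp
  qed
  show "bounded_doubling (Gpn p n) (Lp p) (4 * real p ^ 8)"
    unfolding bounded_doubling_def
  proof (intro conjI allI impI)
    show "proper_L (Gpn p n) (Lp p)" by (rule proper[OF assms])
    fix R :: real assume R: "R \<ge> 1"
    have d: "real (card (ball_L (Gpn p n) (Lp p) (2 * R))) \<le>
      (8 * 2 ^ 2 * real p + 1) * real (card (ball_L (Gpn p n) (Lp p) R))"
      using dil[OF assms, of 2 R] R by simp
    have "(2::real) ^ 7 \<le> real p ^ 7" using P2 by (intro power_mono) auto
    then have "128 * real p \<le> real p ^ 7 * real p" using P2 by (intro mult_right_mono) auto
    then have "8 * 2 ^ 2 * real p + 1 \<le> 4 * real p ^ 8" using P2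
      by (simp add: power_Suc2[symmetric] del: power_Suc)
    then have "(8 * 2 ^ 2 * real p + 1) * real (card (ball_L (Gpn p n) (Lp p) R))
       \<le> 4 * real p ^ 8 * real (card (ball_L (Gpn p n) (Lp p) R))"
      by (intro mult_right_mono) auto
    then show "real (card (ball_L (Gpn p n) (Lp p) (2 * R))) \<le>
      4 * real p ^ 8 * real (card (ball_L (Gpn p n) (Lp p) R))" using d by linarith
  qed
qed

end
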